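(* Fix $K>0$ and $z\in\mathbb{C}$, and assume $b_n\ge m\ge m_0$ for a sufficiently large constant $m_0$. For all sufficiently large $n$ (depending on $K$) the following holds on the event $\mathcal{E}_K$: for every unit vector $v\in\mathbb{C}^n$ with $\|X_z v\|\le b_n^{-10m}m^{-1/2}$, and for every $i\in[m-1]$, either $\|v_{[i]}\|\ge b_n^{-10m}m^{-1/2}$ or $\|v_{[i+1]}\|\ge b_n^{-10m}m^{-1/2}$.
   Context: Let $b_n$ divide $n$, $m=n/b_n$, $c_n=3b_n$. Let $\tilde D_i,\tilde U_i,\tilde T_i$ ($i\in[m]$) be $b_n\times b_n$ matrices, $D_i=\tilde D_i/\sqrt{c_n}$, $U_i=\tilde U_i/\sqrt{c_n}$, $T_i=\tilde T_i/\sqrt{c_n}$, $(D_i)_z=D_i-zI_{b_n}$. Let $X$ be the $n\times n$ block matrix ($m\times m$ blocks of size $b_n$, block indices modulo $m$) with $(i,i)$ block $D_i$, $(i,i-1)$ block $T_{i-1}$, $(i,i+1)$ block $U_{i+1}$, other blocks zero, and $X_z=X-zI$. $\mathcal{E}_K$ is the event that for all $i\in[m]$: $\|U_i\|,\|(D_i)_z\|,\|T_i\|\le K$ and the smallest singular values satisfy $s_{b_n}(U_i),s_{b_n}(T_i)\ge b_n^{-5}$. For $v\in\mathbb{C}^n$, $v_{[1]},\dots,v_{[m]}\in\mathbb{C}^{b_n}$ are the consecutive blocks of $b_n$ coordinates of $v$. *)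

theory Defs
  imports Complex_Main
begin

text \<open>Vectors in C^k are functions nat => complex (only indices < k matter);
  k x k matrices are functions nat => nat => complex (only indices < k matter).\<close>

type_synonym cvec = "nat \<Rightarrow> complex"
type_synonym cmat = "nat \<Rightarrow> nat \<Rightarrow> complex"

definition vnorm :: "nat \<Rightarrow> cvec \<Rightarrow> real" where
  "vnorm k v = sqrt (\<Sum>p<k. (cmod (v p))\<^sup>2)"

definition mv :: "nat \<Rightarrow> cmat \<Rightarrow> cvec \<Rightarrow> cvec" where
  "mv k A v = (\<lambda>p. \<Sum>q<k. A p q * v q)"

definition opnorm :: "nat \<Rightarrow> cmat \<Rightarrow> real" where
  "opnorm k A = Sup {vnorm k (mv k A x) | x. vnorm k x = 1}"

definition smin :: "nat \<Rightarrow> cmat \<Rightarrow> real" where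
  "smin k A = Inf {vnorm k (mv k A x) | x. vnorm k x = 1}"

definition shiftz :: "cmat \<Rightarrow> complex \<Rightarrow> cmat" where
  "shiftz A z = (\<lambda>r s. A r s - (if r = s then z else 0))"

text \<open>Normalisation by sqrt(c_n), c_n = 3 b_n.\<close>
definition cscale :: "nat \<Rightarrow> cmat \<Rightarrow> cmat" where
  "cscale b A = (\<lambda>r s. A r s / complex_of_real (sqrt (3 * real b)))"

text \<open>The n x n block matrix X (n = b*m), blocks indexed 0..m-1 modulo m:
  block (i,i) = D i, block (i,i-1) = T (i-1), block (i,i+1) = U (i+1).\<close>
definition blockX :: "nat \<Rightarrow> nat \<Rightarrow> (nat \<Rightarrow> cmat) \<Rightarrow> (nat \<Rightarrow> cmat) \<Rightarrow> (nat \<Rightarrow> cmat) \<Rightarrow> cmat" where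
  "blockX b m D U T = (\<lambda>p q.
     let i = p div b; r = p mod b; j = q div b; s = q mod b in
       (if j = i then D i r s else 0)
     + (if j = (i + m - 1) mod m then T ((i + m - 1) mod m) r s else 0)
     + (if j = (i + 1) mod m then U ((i + 1) mod m) r s else 0))"

text \<open>The i-th block v_[i] of b consecutive coordinates (0-based).\<close>
definition blk :: "nat \<Rightarrow> cvec \<Rightarrow> nat \<Rightarrow> cvec" where
  "blk b v i = (\<lambda>r. v (i * b + r))"

definition eventE :: "real \<Rightarrow> complex \<Rightarrow> nat \<Rightarrow> nat \<Rightarrow> (nat \<Rightarrow> cmat) \<Rightarrow> (nat \<Rightarrow> cmat) \<Rightarrow> (nat \<Rightarrow> cmat) \<Rightarrow> bool" where
  "eventE K z b m D U T \<longleftrightarrow>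
     (\<forall>i<m. opnorm b (U i) \<le> K \<and> opnorm b (shiftz (D i) z) \<le> K \<and> opnorm b (T i) \<le> K
          \<and> smin b (U i) \<ge> real b powr (-5) \<and> smin b (T i) \<ge> real b powr (-5))"

end

theory Submission
  imports Defs "HOL-Analysis.L2_Norm"
begin

lemma vnorm_L2: "vnorm k v = L2_set (\<lambda>p. cmod (v p)) {..<k}"
  by (simp add: vnorm_def L2_set_def)

lemma vnorm_nonneg: "0 \<le> vnorm k v" by (simp add: vnorm_def sum_nonneg)

lemma vnorm_add: "vnorm k (\<lambda>p. x p + y p) \<le> vnorm k x + vnorm k y"
proof -
  have "vnorm k (\<lambda>p. x p + y p) \<le> L2_set (\<lambda>p. cmod (x p) + cmod (y p)) {..<k}"
    unfolding vnorm_L2 by (rule L2_set_mono) (auto simp: norm_triangle_ineq)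
  also have "\<dots> \<le> vnorm k x + vnorm k y" unfolding vnorm_L2 by (rule L2_set_triangle_ineq)
  finally show ?thesis .
qed

lemma vnorm_scale: "vnorm k (\<lambda>p. c * x p) = cmod c * vnorm k x"
  unfolding vnorm_L2 by (simp add: L2_set_right_distrib norm_mult)

lemma vnorm_cong: "(\<And>p. p < k \<Longrightarrow> x p = y p) \<Longrightarrow> vnorm k x = vnorm k y"
  unfolding vnorm_def by (intro arg_cong[where f=sqrt] sum.cong) auto

lemma vnorm_comp: "p < k \<Longrightarrow> cmod (v p) \<le> vnorm k v"
  unfolding vnorm_L2 by (rule member_le_L2_set) auto

lemma mv_scale: "mv k A (\<lambda>q. c * x q) = (\<lambda>p. c * mv k A x p)"
  unfolding mv_def by (auto simp: sum_distrib_left mult_ac)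

lemma mv_bound: "vnorm k (mv k A x) \<le> (\<Sum>p<k. \<Sum>q<k. cmod (A p q)) * vnorm k x"
proof -
  have "vnorm k (mv k A x) \<le> (\<Sum>p<k. cmod (mv k A x p))"
    unfolding vnorm_L2 by (rule L2_set_le_sum) auto
  also have "\<dots> \<le> (\<Sum>p<k. (\<Sum>q<k. cmod (A p q)) * vnorm k x)"
  proof (rule sum_mono)
    fix p assume "p \<in> {..<k}"
    have "cmod (mv k A x p) \<le> (\<Sum>q<k. cmod (A p q * x q))"
      unfolding mv_def by (rule norm_sum)
    also have "\<dots> \<le> (\<Sum>q<k. cmod (A p q) * vnorm k x)"
      by (rule sum_mono) (auto simp: norm_mult intro!: mult_left_mono vnorm_comp)
    finally show "cmod (mv k A x p) \<le> (\<Sum>q<k. cmod (A p q)) * vnorm k x"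
      by (simp add: sum_distrib_right)
  qed
  finally show ?thesis by (simp add: sum_distrib_right)
qed

lemma opnorm_le: "vnorm k (mv k A x) \<le> opnorm k A * vnorm k x"
proof (cases "vnorm k x = 0")
  case True
  have "\<forall>q<k. x q = 0" using True unfolding vnorm_L2 by (simp add: L2_set_eq_0_iff)
  then have "mv k A x = (\<lambda>p. 0)" unfolding mv_def by auto
  then show ?thesis using True by (simp add: vnorm_def)
next
  case False
  define t where "t = vnorm k x"
  have t: "t > 0" using False vnorm_nonneg[of k x] unfolding t_def by linarith
  define y where "y = (\<lambda>q. complex_of_real (1/t) * x q)"
  have yn: "vnorm k y = 1" unfolding y_def vnorm_scale using t by (simp add: t_def norm_divide)
  have bdd: "bdd_above {vnorm k (mv k A x) | x. vnorm k x = 1}"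
    unfolding bdd_above_def
  proof (intro exI ballI)
    fix y assume "y \<in> {vnorm k (mv k A x) | x. vnorm k x = 1}"
    then obtain w where "y = vnorm k (mv k A w)" "vnorm k w = 1" by blast
    then show "y \<le> (\<Sum>p<k. \<Sum>q<k. cmod (A p q))" using mv_bound[of k A w] by simp
  qed
  have "vnorm k (mv k A y) \<le> opnorm k A"
    unfolding opnorm_def by (rule cSup_upper[OF _ bdd]) (use yn in blast)
  moreover have "vnorm k (mv k A y) = vnorm k (mv k A x) / t"
    unfolding y_def mv_scale vnorm_scale using t by (simp add: norm_divide)
  ultimately show ?thesis using t by (simp add: t_def divide_le_eq mult_ac)
qed

lemma smin_le:
  assumes "k > 0"
  shows "smin k A * vnorm k x \<le> vnorm k (mv k A x)"
proof (cases "vnorm k x = 0")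
  case True
  then show ?thesis by (simp add: vnorm_nonneg)
next
  case False
  define t where "t = vnorm k x"
  have t: "t > 0" using False vnorm_nonneg[of k x] unfolding t_def by linarith
  define y where "y = (\<lambda>q. complex_of_real (1/t) * x q)"
  have yn: "vnorm k y = 1" unfolding y_def vnorm_scale using t by (simp add: t_def norm_divide)
  have bdd: "bdd_below {vnorm k (mv k A x) | x. vnorm k x = 1}"
    unfolding bdd_below_def using vnorm_nonneg by force
  have "smin k A \<le> vnorm k (mv k A y)"
    unfolding smin_def by (rule cInf_lower[OF _ bdd]) (use yn in blast)
  moreover have "vnorm k (mv k A y) = vnorm k (mv k A x) / t"
    unfolding y_def mv_scale vnorm_scale using t by (simp add: norm_divide)
  ultimately show ?thesis using t by (simp add: t_def le_divide_eq mult_ac)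
qed

lemma sum_blocks: "(\<Sum>q<b*(m::nat). f q) = (\<Sum>j<m. \<Sum>t<b. f (j*b+t))"
proof (induction m)
  case 0 then show ?case by simp
next
  case (Suc m)
  have eq: "{..<b*Suc m} = {..<b*m} \<union> {b*m..<b*m+b}" by auto
  have "(\<Sum>q<b*Suc m. f q) = (\<Sum>q<b*m. f q) + (\<Sum>q\<in>{b*m..<b*m+b}. f q)"
    unfolding eq by (rule sum.union_disjoint) auto
  also have "(\<Sum>q\<in>{b*m..<b*m+b}. f q) = (\<Sum>t<b. f (m*b+t))"
    using sum.shift_bounds_nat_ivl[where g=f and m=0 and k="b*m" and n=b] by (simp add: atLeast0LessThan mult.commute add.commute)
  finally show ?case using Suc by simp
qed


lemma block_eq:
  assumes m: "0 < m" and r: "r < m" and s: "s < b"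
  shows "blk b (mv (b*m) (shiftz (blockX b m D U T) z) v) r s =
    mv b (shiftz (D r) z) (blk b v r) s + mv b (T ((r+m-1) mod m)) (blk b v ((r+m-1) mod m)) s
    + mv b (U ((r+1) mod m)) (blk b v ((r+1) mod m)) s"
proof -
  define r1 where "r1 = (r+m-1) mod m"
  define r2 where "r2 = (r+1) mod m"
  have r1m: "r1 < m" and r2m: "r2 < m" using m by (auto simp: r1_def r2_def)
  define A where "A = mv b (shiftz (D r) z) (blk b v r) s"
  define B where "B = mv b (T r1) (blk b v r1) s"
  define C where "C = mv b (U r2) (blk b v r2) s"
  have tm: "shiftz (blockX b m D U T) z (r*b+s) (j*b+t) * v (j*b+t) =
     (if j = r then shiftz (D r) z s t * blk b v r t else 0)
     + (if j = r1 then T r1 s t * blk b v r1 t else 0)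
     + (if j = r2 then U r2 s t * blk b v r2 t else 0)" if t: "t < b" for j t
  proof -
    have d1: "(r*b+s) div b = r" "(r*b+s) mod b = s" using s by auto
    have d2: "(j*b+t) div b = j" "(j*b+t) mod b = t" using t by auto
    have eq: "(r*b+s = j*b+t) \<longleftrightarrow> (j = r \<and> s = t)"
      using d1 d2 by (metis)
    show ?thesis
      unfolding shiftz_def blockX_def Let_def d1 d2 eq blk_def r1_def[symmetric] r2_def[symmetric]
      by (auto simp: algebra_simps)
  qed
  have inner: "(\<Sum>t<b. shiftz (blockX b m D U T) z (r*b+s) (j*b+t) * v (j*b+t)) =
     (if j = r then A else 0) + (if j = r1 then B else 0) + (if j = r2 then C else 0)" for j
    by (simp add: tm sum.distrib A_def B_def C_def mv_def)
  have "blk b (mv (b*m) (shiftz (blockX b m D U T) z) v) r s =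
     (\<Sum>j<m. (if j = r then A else 0) + (if j = r1 then B else 0) + (if j = r2 then C else 0))"
    unfolding blk_def mv_def sum_blocks inner by simp
  also have "\<dots> = A + B + C"
    using r r1m r2m by (simp add: sum.distrib)
  finally show ?thesis by (simp add: A_def B_def C_def r1_def r2_def)
qed


lemma norm_blocks: "(vnorm (b*m) v)\<^sup>2 = (\<Sum>j<m. (vnorm b (blk b v j))\<^sup>2)"
  unfolding vnorm_def by (simp add: sum_nonneg sum_blocks blk_def)

lemma blk_le: "j < m \<Longrightarrow> vnorm b (blk b v j) \<le> vnorm (b*m) v"
proof -
  assume j: "j < m"
  have "(vnorm b (blk b v j))\<^sup>2 \<le> (\<Sum>j<m. (vnorm b (blk b v j))\<^sup>2)"
    by (rule member_le_sum) (use j in auto)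
  then have "(vnorm b (blk b v j))\<^sup>2 \<le> (vnorm (b*m) v)\<^sup>2" by (simp add: norm_blocks)
  then show ?thesis by (rule power2_le_imp_le) (simp add: vnorm_nonneg)
qed

lemma vnorm_diff3: "vnorm k (\<lambda>p. x p - y p - w p) \<le> vnorm k x + vnorm k y + vnorm k w"
proof -
  have "vnorm k (\<lambda>p. x p - y p - w p) = vnorm k (\<lambda>p. (x p + (-1) * y p) + (-1) * w p)"
    by simp
  also have "\<dots> \<le> vnorm k (\<lambda>p. x p + (-1) * y p) + vnorm k (\<lambda>p. (-1) * w p)"
    by (rule vnorm_add)
  also have "\<dots> \<le> vnorm k x + vnorm k (\<lambda>p. (-1) * y p) + vnorm k (\<lambda>p. (-1) * w p)"
    using vnorm_add[of k x "\<lambda>p. (-1) * y p"] by simp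
  also have "\<dots> = vnorm k x + vnorm k y + vnorm k w"
    by (simp only: vnorm_scale) simp
  finally show ?thesis .
qed

lemma step:
  assumes m: "0 < m" and b: "0 < b" and r: "r < m"
  and E: "eventE K z b m D U T"
  and wn: "vnorm (b*m) (mv (b*m) (shiftz (blockX b m D U T) z) v) \<le> \<epsilon>"
  shows "real b powr (-5) * vnorm b (blk b v ((r+1) mod m)) \<le>
     \<epsilon> + K * vnorm b (blk b v r) + K * vnorm b (blk b v ((r+m-1) mod m))"
proof -
  define r1 where "r1 = (r+m-1) mod m"
  define r2 where "r2 = (r+1) mod m"
  have r1m: "r1 < m" and r2m: "r2 < m" using m by (auto simp: r1_def r2_def)
  define w where "w = mv (b*m) (shiftz (blockX b m D U T) z) v"
  have eq: "vnorm b (mv b (U r2) (blk b v r2)) = vnorm b (\<lambda>s. blk b w r s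
     - mv b (shiftz (D r) z) (blk b v r) s - mv b (T r1) (blk b v r1) s)"
    by (rule vnorm_cong) (simp add: w_def block_eq[OF m r] r1_def r2_def)
  have "real b powr (-5) * vnorm b (blk b v r2) \<le> smin b (U r2) * vnorm b (blk b v r2)"
    using E r2m unfolding eventE_def by (auto intro!: mult_right_mono simp: vnorm_nonneg)
  also have "\<dots> \<le> vnorm b (mv b (U r2) (blk b v r2))" by (rule smin_le) (use b in simp)
  also have "\<dots> \<le> vnorm b (blk b w r) + vnorm b (mv b (shiftz (D r) z) (blk b v r))
      + vnorm b (mv b (T r1) (blk b v r1))"
    unfolding eq by (rule vnorm_diff3)
  also have "\<dots> \<le> \<epsilon> + K * vnorm b (blk b v r) + K * vnorm b (blk b v r1)"
  proof -
    have "vnorm b (blk b w r) \<le> \<epsilon>" using blk_le[OF r, of b w] wn by (simp add: w_def)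
    moreover have "vnorm b (mv b (shiftz (D r) z) (blk b v r)) \<le> K * vnorm b (blk b v r)"
      using opnorm_le[of b "shiftz (D r) z" "blk b v r"] E r unfolding eventE_def
      by (meson mult_right_mono order_trans vnorm_nonneg)
    moreover have "vnorm b (mv b (T r1) (blk b v r1)) \<le> K * vnorm b (blk b v r1)"
      using opnorm_le[of b "T r1" "blk b v r1"] E r1m unfolding eventE_def
      by (meson mult_right_mono order_trans vnorm_nonneg)
    ultimately show ?thesis by linarith
  qed
  finally show ?thesis by (simp add: r1_def r2_def)
qed


lemma mod_pred: "0 < m \<Longrightarrow> 1 \<le> a \<Longrightarrow> (a mod m + m - 1) mod m = (a - 1) mod (m::nat)"
proof -
  assume m: "0 < m" and a: "1 \<le> a"
  have "(a mod m + m - 1) mod m = (a mod m + (m - 1)) mod m" using m by simp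
  also have "\<dots> = (a + (m - 1)) mod m" by (simp add: mod_add_left_eq)
  also have "a + (m - 1) = (a - 1) + m" using m a by simp
  finally show ?thesis by simp
qed

lemma hm: "(0::real) < x \<Longrightarrow> x powr (-1/2) * x powr (-1/2) = 1 / x"
proof -
  assume x: "0 < x"
  have "x powr (-1/2) * x powr (-1/2) = x powr (-1/2 + -1/2)" by (rule powr_add[symmetric])
  also have "\<dots> = x powr (- 1)" by simp
  also have "\<dots> = 1 / x" using x by (simp add: powr_minus divide_inverse)
  finally show ?thesis .
qed
lemma me: "(0::real) < m \<Longrightarrow> 0 < b \<Longrightarrow> e = b powr (-10 * m) * m powr (-1/2) \<Longrightarrow> m * e\<^sup>2 = b powr (-20 * m)"
proof -
  assume mpos: "0 < m" and b: "0 < b" and eps: "e = b powr (-10 * m) * m powr (-1/2)"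
  have "m * e\<^sup>2 = m * (m powr (-1/2) * m powr (-1/2)) * (b powr (-10 * m) * b powr (-10 * m))"
    unfolding eps power2_eq_square by (simp only: mult_ac)
  also have "\<dots> = m * (1/m) * b powr (-10 * m + -10 * m)" by (simp only: hm[OF mpos] powr_add)
  also have "\<dots> = b powr (-20 * m)" using mpos by simp
  finally show ?thesis .
qed
lemma fin: "(0::real) < m \<Longrightarrow> 1 < b \<Longrightarrow> (b powr (6 * m))\<^sup>2 * b powr (-20 * m) < 1"
proof -
  assume mpos: "0 < m" and b: "1 < b"
  have "(b powr (6 * m))\<^sup>2 * b powr (-20 * m) = b powr (6 * m + 6 * m + -20 * m)"
    unfolding power2_eq_square by (simp only: powr_add)
  also have "\<dots> = b powr (-8 * m)" by simp
  also have "\<dots> < b powr 0" using b mpos by (subst powr_less_cancel_iff) auto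
  finally show ?thesis using b by simp
qed

lemma core:
  assumes K: "K > 0" and m3: "3 \<le> m" and bK: "1 + 2*K \<le> real b" and b3: "3 \<le> b"
  and E: "eventE K z b m D U T"
  and vn: "vnorm (b*m) v = 1"
  and wn: "vnorm (b*m) (mv (b*m) (shiftz (blockX b m D U T) z) v) \<le> \<epsilon>"
  and eps: "\<epsilon> = real b powr (-10 * real m) * real m powr (-1/2)"
  and i: "1 \<le> i" "i \<le> m - 1"
  and small: "vnorm b (blk b v (i-1)) < \<epsilon>" "vnorm b (blk b v i) < \<epsilon>"
  shows False
proof -
  have m0: "0 < m" and b0: "0 < b" using m3 b3 by auto
  have bpos: "(0::real) < real b" using b0 by simp
  define a where "a j = vnorm b (blk b v j)" for j
  define c where "c k = a ((i - 1 + k) mod m)" for k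
  define C where "C = real b ^ 5 * (1 + 2*K)"
  have epos: "\<epsilon> > 0" unfolding eps using m0 b0 by simp
  have C1: "1 \<le> C"
  proof -
    have b5: "1 \<le> real b ^ 5" using b0 by simp
    have "real b ^ 5 * 1 \<le> real b ^ 5 * (1 + 2*K)" using K b5 by (intro mult_left_mono) auto
    then show ?thesis using b5 unfolding C_def by linarith
  qed
  have bp5: "real b powr (-5) = 1 / real b ^ 5"
    using bpos by (simp add: powr_minus powr_realpow divide_inverse)
  have rec: "c (k+2) \<le> real b ^ 5 * (\<epsilon> + K * c (k+1) + K * c k)" for k
  proof -
    define r where "r = (i - 1 + (k+1)) mod m"
    have rm: "r < m" using m0 by (simp add: r_def)
    have r2: "(r+1) mod m = (i - 1 + (k+2)) mod m"
      unfolding r_def by (simp add: mod_Suc_eq)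
    have r1: "(r+m-1) mod m = (i - 1 + k) mod m"
      unfolding r_def using mod_pred[OF m0, of "i - 1 + (k+1)"] by simp
    have "real b powr (-5) * c (k+2) \<le> \<epsilon> + K * c (k+1) + K * c k"
      using step[OF m0 b0 rm E wn] unfolding c_def a_def r2 r1 by (simp add: r_def)
    then show ?thesis using bpos unfolding bp5 by (simp add: field_simps)
  qed
  have ind: "c k \<le> C ^ k * \<epsilon> \<and> c (k+1) \<le> C ^ (k+1) * \<epsilon>" for k
  proof (induction k)
    case 0
    have "c 0 < \<epsilon>" using small(1) i m3 by (simp add: c_def a_def)
    moreover have "c 1 < \<epsilon>" using small(2) i m3 by (simp add: c_def a_def)
    moreover have "\<epsilon> \<le> C * \<epsilon>" using C1 epos by simp
    ultimately show ?case by simp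
  next
    case (Suc k)
    have h1: "c k \<le> C ^ (k+1) * \<epsilon>"
      using Suc C1 epos by (meson le_add_same_cancel1 mult_right_mono order_trans power_increasing zero_le_one less_imp_le)
    have h2: "c (k+1) \<le> C ^ (k+1) * \<epsilon>" using Suc by simp
    have p1: "1 \<le> C ^ (k+1)" by (rule one_le_power[OF C1])
    have "c (k+2) \<le> real b ^ 5 * (\<epsilon> + K * c (k+1) + K * c k)" by (rule rec)
    also have "\<dots> \<le> real b ^ 5 * (C^(k+1) * \<epsilon> + K * (C^(k+1) * \<epsilon>) + K * (C^(k+1) * \<epsilon>))"
      using h1 h2 p1 K epos bpos
      by (intro mult_left_mono add_mono mult_left_mono) (auto simp: mult_le_cancel_right1)
    also have "\<dots> = C ^ (k+2) * \<epsilon>" by (simp add: C_def algebra_simps)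
    finally show ?case using Suc by simp
  qed
  have allb: "a j \<le> C ^ (m-1) * \<epsilon>" if j: "j < m" for j
  proof -
    define k where "k = (j + m - (i - 1)) mod m"
    have km: "k \<le> m - 1" using m0 by (simp add: k_def less_Suc_eq_le[symmetric])
    have "(i - 1 + k) mod m = (i - 1 + (j + m - (i - 1))) mod m"
      unfolding k_def by (simp add: mod_add_right_eq)
    also have "i - 1 + (j + m - (i - 1)) = j + m" using i by simp
    finally have "(i - 1 + k) mod m = j" using j by simp
    then have "a j = c k" by (simp add: c_def)
    also have "\<dots> \<le> C ^ k * \<epsilon>" using ind by blast
    also have "\<dots> \<le> C ^ (m-1) * \<epsilon>" using C1 epos km by (intro mult_right_mono power_increasing) auto
    finally show ?thesis .
  qed
  have "1 = (vnorm (b*m) v)\<^sup>2" using vn by simp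
  also have "\<dots> = (\<Sum>j<m. (a j)\<^sup>2)" by (simp add: norm_blocks a_def)
  also have "\<dots> \<le> (\<Sum>j<m. (C ^ (m-1) * \<epsilon>)\<^sup>2)"
    using allb by (intro sum_mono power_mono) (auto simp: a_def vnorm_nonneg)
  also have "\<dots> = real m * (C ^ (m-1) * \<epsilon>)\<^sup>2" by simp
  also have "\<dots> < 1"
  proof -
    have b1: "1 \<le> real b" using b0 by simp
    have Cb: "C \<le> real b ^ 6"
    proof -
      have "C \<le> real b ^ 5 * real b" unfolding C_def using bK by (intro mult_left_mono) auto
      then show ?thesis by (simp add: power_Suc2[symmetric] del: power_Suc)
    qed
    have "C ^ (m-1) \<le> (real b ^ 6) ^ (m-1)" using C1 Cb by (intro power_mono) auto
    also have "\<dots> = real b ^ (6*(m-1))" by (simp add: power_mult)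
    also have "\<dots> \<le> real b ^ (6*m)" using b1 by (intro power_increasing) auto
    also have "\<dots> = real b powr (6 * real m)" using bpos by (simp add: powr_realpow[symmetric])
    finally have P: "C ^ (m-1) \<le> real b powr (6 * real m)" .
    have mpos: "(0::real) < real m" using m0 by simp
    have "real m * (C ^ (m-1) * \<epsilon>)\<^sup>2 = (C ^ (m-1))\<^sup>2 * (real m * \<epsilon>\<^sup>2)"
      by (simp only: power_mult_distrib mult_ac)
    also have "\<dots> \<le> (real b powr (6 * real m))\<^sup>2 * real b powr (-20 * real m)"
      unfolding me[OF mpos bpos eps] using P C1 by (intro mult_right_mono power_mono) auto
    also have "\<dots> < 1" using b3 mpos by (intro fin) auto
    finally show ?thesis .
  qed
  finally show False by simp
qed


theorem proposition2p7:
  fixes K :: real and z :: complex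
  assumes "K > 0"
  shows "\<exists>m0::nat. \<exists>N::nat. \<forall>n b m. N \<le> n \<longrightarrow> b * m = n \<longrightarrow> m0 \<le> m \<longrightarrow> m \<le> b \<longrightarrow>
    (\<forall>Dt Ut Tt :: nat \<Rightarrow> cmat.
      eventE K z b m (\<lambda>i. cscale b (Dt i)) (\<lambda>i. cscale b (Ut i)) (\<lambda>i. cscale b (Tt i)) \<longrightarrow>
      (\<forall>v. vnorm n v = 1 \<longrightarrow>
        vnorm n (mv n (shiftz (blockX b m (\<lambda>i. cscale b (Dt i)) (\<lambda>i. cscale b (Ut i)) (\<lambda>i. cscale b (Tt i))) z) v)
          \<le> real b powr (-10 * real m) * real m powr (-1/2) \<longrightarrow>
        (\<forall>i. 1 \<le> i \<longrightarrow> i \<le> m - 1 \<longrightarrow>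
           vnorm b (blk b v (i - 1)) \<ge> real b powr (-10 * real m) * real m powr (-1/2)
         \<or> vnorm b (blk b v i) \<ge> real b powr (-10 * real m) * real m powr (-1/2))))"
proof (intro exI allI impI)
  fix n b m :: nat and Dt Ut Tt :: "nat \<Rightarrow> cmat" and v :: cvec and i :: nat
  assume "0 \<le> n" and nbm: "b * m = n" and mm: "max 3 (nat \<lceil>1 + 2*K\<rceil>) \<le> m" and mb: "m \<le> b"
    and E: "eventE K z b m (\<lambda>i. cscale b (Dt i)) (\<lambda>i. cscale b (Ut i)) (\<lambda>i. cscale b (Tt i))"
    and vn: "vnorm n v = 1"
    and wn: "vnorm n (mv n (shiftz (blockX b m (\<lambda>i. cscale b (Dt i)) (\<lambda>i. cscale b (Ut i)) (\<lambda>i. cscale b (Tt i))) z) v)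
          \<le> real b powr (-10 * real m) * real m powr (-1/2)"
    and i1: "1 \<le> i" and i2: "i \<le> m - 1"
  have m3: "3 \<le> m" using mm by simp
  have b3: "3 \<le> b" using m3 mb by simp
  have "nat \<lceil>1 + 2*K\<rceil> \<le> b" using mm mb by simp
  then have bK: "1 + 2*K \<le> real b" by linarith
  show "vnorm b (blk b v (i - 1)) \<ge> real b powr (-10 * real m) * real m powr (-1/2)
         \<or> vnorm b (blk b v i) \<ge> real b powr (-10 * real m) * real m powr (-1/2)"
  proof (rule ccontr)
    assume "\<not> ?thesis"
    then have s: "vnorm b (blk b v (i - 1)) < real b powr (-10 * real m) * real m powr (-1/2)"
       "vnorm b (blk b v i) < real b powr (-10 * real m) * real m powr (-1/2)" by auto
    show False
      by (rule core[OF assms m3 bK b3 E _ _ refl i1 i2 s]) (use vn wn nbm in auto)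
  qed
qed

end
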